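(* There is a function $l:\mathbb{N}\to\mathbb{N}$ such that for every $m$ and every graph $G$, every equivalence class of $\cong_m$ on $V(G)$ is a union of connected components of the graph of $\cong^D_{l(m)}$ on $V(G)$.
   Context: Graphs are finite, simple, undirected, loopless, possibly labelled with unary predicates from a finite set. $N(u)$ is the neighbourhood of $u$ and $D(u,v):=N(u)\,\Delta\,N(v)$. $u\cong_m v$ means Duplicator wins the standard $m$-round Ehrenfeucht–Fraïssé game on $(G,u)$ and $(G,v)$ (equivalently, $u,v$ satisfy the same FO formulas of quantifier rank $m$). Differential game from $(\bar a,\bar b)$ on a single graph $G$: in each round, with current tuples $(a_1,\dots,a_n),(b_1,\dots,b_n)$, Spoiler chooses $i\le n$ and $v\in D(a_i,b_i)$ and declares whether $v$ becomes $a_{n+1}$ or $b_{n+1}$ (if all $D(a_i,b_i)$ are empty, Duplicator wins); Duplicator answers with a vertex $w\in D(a_i,b_i)$ (same $i$), which becomes the other of $b_{n+1},a_{n+1}$. After the rounds, Duplicator wins iff $a_i\mapsto b_i$ is a label-preserving isomorphism between the induced subgraphs on the $a$'s and $b$'s (equalities, adjacencies, labels preserved). $u\cong^D_m v$ means Duplicator has a winning strategy in the $m$-round differential game from $((u),(v))$. The graph of this relation has vertex set $V(G)$ and an edge between distinct $u,v$ iff $u\cong^D_m v$. *)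

theory Defs
  imports Main
begin

text \<open>Vertices are natural numbers (every finite graph is
isomorphic to one of this form); each vertex carries the set of unary labels it satisfies,
labels being drawn from a finite set of label names (natural numbers).\<close>

record graph =
  verts :: "nat set"
  adj   :: "nat \<Rightarrow> nat \<Rightarrow> bool"
  lab   :: "nat \<Rightarrow> nat set"

definition wf_graph :: "graph \<Rightarrow> bool" where
  "wf_graph G \<longleftrightarrow> finite (verts G)
     \<and> (\<forall>x y. adj G x y \<longrightarrow> x \<in> verts G \<and> y \<in> verts G)
     \<and> (\<forall>x y. adj G x y \<longrightarrow> adj G y x)
     \<and> (\<forall>x. \<not> adj G x x)
     \<and> finite (\<Union>v\<in>verts G. lab G v)"

definition nbhd :: "graph \<Rightarrow> nat \<Rightarrow> nat set" where
  "nbhd G u = {w \<in> verts G. adj G u w}"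

definition Dset :: "graph \<Rightarrow> nat \<Rightarrow> nat \<Rightarrow> nat set" where
  "Dset G u v = (nbhd G u - nbhd G v) \<union> (nbhd G v - nbhd G u)"

text \<open>The map as!i \<mapsto> bs!i is a label-preserving isomorphism of induced subgraphs.\<close>
definition partial_iso :: "graph \<Rightarrow> nat list \<Rightarrow> nat list \<Rightarrow> bool" where
  "partial_iso G as bs \<longleftrightarrow> length as = length bs
     \<and> (\<forall>i<length as. \<forall>j<length as.
           (as!i = as!j \<longleftrightarrow> bs!i = bs!j) \<and> (adj G (as!i) (as!j) \<longleftrightarrow> adj G (bs!i) (bs!j)))
     \<and> (\<forall>i<length as. lab G (as!i) = lab G (bs!i))"

fun ef_win :: "graph \<Rightarrow> nat \<Rightarrow> nat list \<Rightarrow> nat list \<Rightarrow> bool" where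
  "ef_win G 0 as bs = partial_iso G as bs"
| "ef_win G (Suc m) as bs =
     ((\<forall>a\<in>verts G. \<exists>b\<in>verts G. ef_win G m (as @ [a]) (bs @ [b]))
    \<and> (\<forall>b\<in>verts G. \<exists>a\<in>verts G. ef_win G m (as @ [a]) (bs @ [b])))"

definition ef_equiv :: "graph \<Rightarrow> nat \<Rightarrow> nat \<Rightarrow> nat \<Rightarrow> bool" where
  "ef_equiv G m u v \<longleftrightarrow> ef_win G m [u] [v]"

text \<open>Duplicator wins the differential game with m rounds left from (as, bs).
If all D(a_i,b_i) are empty the game ends and the final winning condition is evaluated.\<close>
fun diff_win :: "graph \<Rightarrow> nat \<Rightarrow> nat list \<Rightarrow> nat list \<Rightarrow> bool" where
  "diff_win G 0 as bs = partial_iso G as bs"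
| "diff_win G (Suc m) as bs =
     (if (\<forall>i<length as. Dset G (as!i) (bs!i) = {}) then partial_iso G as bs
      else (\<forall>i<length as. \<forall>x\<in>Dset G (as!i) (bs!i).
              (\<exists>w\<in>Dset G (as!i) (bs!i). diff_win G m (as @ [x]) (bs @ [w]))
            \<and> (\<exists>w\<in>Dset G (as!i) (bs!i). diff_win G m (as @ [w]) (bs @ [x]))))"

definition diff_equiv :: "graph \<Rightarrow> nat \<Rightarrow> nat \<Rightarrow> nat \<Rightarrow> bool" where
  "diff_equiv G m u v \<longleftrightarrow> diff_win G m [u] [v]"

definition diff_graph_edge :: "graph \<Rightarrow> nat \<Rightarrow> nat \<Rightarrow> nat \<Rightarrow> bool" where
  "diff_graph_edge G m u v \<longleftrightarrow> u \<in> verts G \<and> v \<in> verts G \<and> u \<noteq> v \<and> diff_equiv G m u v"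

definition same_component :: "graph \<Rightarrow> nat \<Rightarrow> nat \<Rightarrow> nat \<Rightarrow> bool" where
  "same_component G m u v \<longleftrightarrow> u \<in> verts G \<and> v \<in> verts G \<and> (diff_graph_edge G m)\<^sup>*\<^sup>* u v"

end

theory Submission
  imports Defs
begin


definition DU :: "graph \<Rightarrow> (nat \<times> nat) set \<Rightarrow> nat set" where
  "DU G S = (\<Union>p\<in>S. Dset G (fst p) (snd p))"

definition piso :: "graph \<Rightarrow> (nat \<times> nat) set \<Rightarrow> bool" where
  "piso G S \<longleftrightarrow> (\<forall>p\<in>S. \<forall>q\<in>S. (fst p = fst q \<longleftrightarrow> snd p = snd q)
      \<and> (adj G (fst p) (fst q) \<longleftrightarrow> adj G (snd p) (snd q)) \<and> lab G (fst p) = lab G (snd p))"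

fun dw :: "graph \<Rightarrow> nat \<Rightarrow> (nat \<times> nat) set \<Rightarrow> bool" where
  "dw G 0 S = piso G S"
| "dw G (Suc k) S = (if (\<forall>p\<in>S. Dset G (fst p) (snd p) = {}) then piso G S
     else (\<forall>p\<in>S. \<forall>x\<in>Dset G (fst p) (snd p).
        (\<exists>w\<in>Dset G (fst p) (snd p). dw G k (insert (x,w) S))
      \<and> (\<exists>w\<in>Dset G (fst p) (snd p). dw G k (insert (w,x) S))))"

lemma partial_iso_piso:
  assumes "length as = length bs"
  shows "partial_iso G as bs \<longleftrightarrow> piso G (set (zip as bs))"
proof
  assume h: "partial_iso G as bs"
  show "piso G (set (zip as bs))" unfolding piso_def
  proof (intro ballI)
    fix p q assume "p \<in> set (zip as bs)" "q \<in> set (zip as bs)"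
    then obtain i j where ij: "i < length as" "j < length as" "p = (as!i, bs!i)" "q = (as!j, bs!j)"
      using assms by (auto simp: set_zip)
    have "\<forall>i<length as. \<forall>j<length as. (as!i = as!j \<longleftrightarrow> bs!i = bs!j) \<and> (adj G (as!i) (as!j) \<longleftrightarrow> adj G (bs!i) (bs!j))"
      "\<forall>i<length as. lab G (as!i) = lab G (bs!i)" using h unfolding partial_iso_def by auto
    then show "(fst p = fst q \<longleftrightarrow> snd p = snd q) \<and> (adj G (fst p) (fst q) \<longleftrightarrow> adj G (snd p) (snd q)) \<and> lab G (fst p) = lab G (snd p)"
      using ij by simp
  qed
next
  assume h: "piso G (set (zip as bs))"
  have m: "i < length as \<Longrightarrow> (as!i, bs!i) \<in> set (zip as bs)" for i
    using assms by (auto simp: set_zip)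
  show "partial_iso G as bs" unfolding partial_iso_def
  proof (intro conjI allI impI)
    fix i j assume "i < length as" "j < length as"
    note hh = bspec[OF bspec[OF h[unfolded piso_def] m[OF this(1)]] m[OF this(2)]]
    from hh show "(as ! i = as ! j) = (bs ! i = bs ! j)"
      "adj G (as ! i) (as ! j) = adj G (bs ! i) (bs ! j)" by simp_all
  next
    fix i assume "i < length as"
    from h m[OF this] show "lab G (as ! i) = lab G (bs ! i)" unfolding piso_def by auto
  qed (use assms in auto)
qed

lemma all_zip:
  "length as = length bs \<Longrightarrow> (\<forall>i<length as. Q (as!i) (bs!i)) \<longleftrightarrow> (\<forall>p\<in>set (zip as bs). Q (fst p) (snd p))"
  by (auto simp: set_zip)

lemma diff_win_dw:
  "length as = length bs \<Longrightarrow> diff_win G k as bs = dw G k (set (zip as bs))"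
proof (induction k arbitrary: as bs)
  case 0
  then show ?case by (simp add: partial_iso_piso)
next
  case (Suc k)
  have IH: "\<And>x w. diff_win G k (as @ [x]) (bs @ [w]) = dw G k (insert (x,w) (set (zip as bs)))"
    using Suc by simp
  show ?case
    apply (simp only: diff_win.simps dw.simps IH all_zip[OF Suc.prems, where Q="\<lambda>a b. Dset G a b = {}"]
      all_zip[OF Suc.prems, where Q="\<lambda>a b. \<forall>x\<in>Dset G a b. (\<exists>w\<in>Dset G a b. dw G k (insert (x,w) (set (zip as bs))))
        \<and> (\<exists>w\<in>Dset G a b. dw G k (insert (w,x) (set (zip as bs))))"] partial_iso_piso[OF Suc.prems])
    done
qed

lemma piso_mono: "S \<subseteq> T \<Longrightarrow> piso G T \<Longrightarrow> piso G S"
  unfolding piso_def by blast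

lemma dw_mono: "dw G (Suc k) S \<Longrightarrow> dw G k S"
proof (induction k arbitrary: S)
  case 0
  show ?case
  proof (cases "\<forall>p\<in>S. Dset G (fst p) (snd p) = {}")
    case True then show ?thesis using 0 by simp
  next
    case False
    then obtain p x where px: "p \<in> S" "x \<in> Dset G (fst p) (snd p)" by blast
    with 0 False obtain w where "dw G 0 (insert (x,w) S)" by (auto simp del: dw.simps(1))
    then show ?thesis using piso_mono[of S "insert (x,w) S"] by auto
  qed
next
  case (Suc k)
  show ?case
  proof (cases "\<forall>p\<in>S. Dset G (fst p) (snd p) = {}")
    case True then show ?thesis using Suc.prems by simp
  next
    case False
    have all: "\<forall>p\<in>S. \<forall>x\<in>Dset G (fst p) (snd p).
        (\<exists>w\<in>Dset G (fst p) (snd p). dw G (Suc k) (insert (x,w) S))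
      \<and> (\<exists>w\<in>Dset G (fst p) (snd p). dw G (Suc k) (insert (w,x) S))"
      using Suc.prems False by (simp only: dw.simps(2)[of G "Suc k"] if_False)
    have "\<forall>p\<in>S. \<forall>x\<in>Dset G (fst p) (snd p).
        (\<exists>w\<in>Dset G (fst p) (snd p). dw G k (insert (x,w) S))
      \<and> (\<exists>w\<in>Dset G (fst p) (snd p). dw G k (insert (w,x) S))"
      using all Suc.IH by blast
    then show ?thesis using False by (simp only: dw.simps(2)[of G k] if_False)
  qed
qed

lemma dw_le: "k \<le> K \<Longrightarrow> dw G K S \<Longrightarrow> dw G k S"
proof (induction K)
  case 0 then show ?case by simp
next
  case (Suc K)
  show ?case
  proof (cases "k = Suc K")
    case True then show ?thesis using Suc.prems by simp
  next
    case False
    then have "k \<le> K" using Suc.prems by simp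
    moreover have "dw G K S" using dw_mono Suc.prems(2) by blast
    ultimately show ?thesis using Suc.IH by blast
  qed
qed

lemma dw_piso: "dw G k S \<Longrightarrow> piso G S"
proof -
  assume "dw G k S"
  then have "dw G 0 S" using dw_le[of 0 k G S] by blast
  then show ?thesis by simp
qed

lemma Dset_sym: "Dset G a b = Dset G b a"
  unfolding Dset_def by blast

lemma Dset_verts: "Dset G a b \<subseteq> verts G"
  unfolding Dset_def nbhd_def by blast

lemma Dset_mem: "wf_graph G \<Longrightarrow> z \<in> verts G \<Longrightarrow> z \<in> Dset G a b \<longleftrightarrow> (adj G a z \<noteq> adj G b z)"
  unfolding Dset_def nbhd_def by auto

lemma adj_sym: "wf_graph G \<Longrightarrow> adj G a b \<longleftrightarrow> adj G b a"
  unfolding wf_graph_def by blast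

lemma adj_verts: "wf_graph G \<Longrightarrow> adj G a b \<Longrightarrow> a \<in> verts G \<and> b \<in> verts G"
  unfolding wf_graph_def by blast

lemma mixed1:
  assumes "dw G (Suc k) S" "p \<in> S" "(z,z') \<in> S" "z \<in> Dset G (fst p) (snd p)"
  shows "z' \<in> Dset G (fst p) (snd p)"
proof -
  have "\<not> (\<forall>p\<in>S. Dset G (fst p) (snd p) = {})" using assms by blast
  then obtain w where w: "w \<in> Dset G (fst p) (snd p)" "dw G k (insert (z,w) S)"
    using assms by (simp only: dw.simps if_False) blast
  then have "piso G (insert (z,w) S)" using dw_piso by blast
  then have "w = z'" using assms(3) unfolding piso_def by force
  then show ?thesis using w by simp
qed

lemma mixed2:
  assumes "dw G (Suc k) S" "p \<in> S" "(z,z') \<in> S" "z' \<in> Dset G (fst p) (snd p)"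
  shows "z \<in> Dset G (fst p) (snd p)"
proof -
  have "\<not> (\<forall>p\<in>S. Dset G (fst p) (snd p) = {})" using assms by blast
  then obtain w where w: "w \<in> Dset G (fst p) (snd p)" "dw G k (insert (w,z') S)"
    using assms by (simp only: dw.simps if_False) blast
  then have "piso G (insert (w,z') S)" using dw_piso by blast
  then have "w = z" using assms(3) unfolding piso_def by force
  then show ?thesis using w by simp
qed

lemma piso_swap: "piso G (prod.swap ` S) \<longleftrightarrow> piso G S"
  unfolding piso_def by auto

lemma dw_swap1: "dw G k S \<Longrightarrow> dw G k (prod.swap ` S)"
proof (induction k arbitrary: S)
  case 0 then show ?case by (simp add: piso_swap)
next
  case (Suc k)
  show ?case
  proof (cases "\<forall>p\<in>S. Dset G (fst p) (snd p) = {}")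
    case True
    then have "\<forall>p\<in>prod.swap ` S. Dset G (fst p) (snd p) = {}" by (auto simp: Dset_sym)
    then show ?thesis using True Suc.prems by (simp add: piso_swap)
  next
    case False
    then have F: "\<not> (\<forall>p\<in>prod.swap ` S. Dset G (fst p) (snd p) = {})" by (auto simp: Dset_sym)
    have ins: "insert (x,w) (prod.swap ` S) = prod.swap ` insert (w,x) S" for x w by simp
    have "\<forall>p\<in>prod.swap ` S. \<forall>x\<in>Dset G (fst p) (snd p).
        (\<exists>w\<in>Dset G (fst p) (snd p). dw G k (insert (x,w) (prod.swap ` S)))
      \<and> (\<exists>w\<in>Dset G (fst p) (snd p). dw G k (insert (w,x) (prod.swap ` S)))"
    proof (intro ballI conjI)
      fix p x assume p: "p \<in> prod.swap ` S" and x: "x \<in> Dset G (fst p) (snd p)"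
      obtain q where q: "q \<in> S" "p = prod.swap q" using p by blast
      have xq: "x \<in> Dset G (fst q) (snd q)" using x q by (simp add: Dset_sym)
      have all: "\<forall>p\<in>S. \<forall>x\<in>Dset G (fst p) (snd p).
        (\<exists>w\<in>Dset G (fst p) (snd p). dw G k (insert (x,w) S))
      \<and> (\<exists>w\<in>Dset G (fst p) (snd p). dw G k (insert (w,x) S))"
        using Suc.prems False by (simp only: dw.simps if_False)
      obtain w1 where w1: "w1 \<in> Dset G (fst q) (snd q)" "dw G k (insert (w1,x) S)"
        using all q xq by blast
      obtain w2 where w2: "w2 \<in> Dset G (fst q) (snd q)" "dw G k (insert (x,w2) S)"
        using all q xq by blast
      show "\<exists>w\<in>Dset G (fst p) (snd p). dw G k (insert (x,w) (prod.swap ` S))"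
        using w1 Suc.IH[OF w1(2)] q by (auto simp: Dset_sym)
      show "\<exists>w\<in>Dset G (fst p) (snd p). dw G k (insert (w,x) (prod.swap ` S))"
        using w2 Suc.IH[OF w2(2)] q by (auto simp: Dset_sym)
    qed
    then show ?thesis using F by (simp only: dw.simps if_False)
  qed
qed

lemma dw_swap: "dw G k (prod.swap ` S) \<longleftrightarrow> dw G k S"
proof -
  have "prod.swap ` prod.swap ` S = S" by (simp add: image_image)
  then show ?thesis using dw_swap1[of G k S] dw_swap1[of G k "prod.swap ` S"] by metis
qed



lemma dw_SucD:
  assumes "dw G (Suc k) S" "q \<in> S" "y \<in> Dset G (fst q) (snd q)"
  shows "(\<exists>w\<in>Dset G (fst q) (snd q). dw G k (insert (y,w) S)) \<and> (\<exists>w\<in>Dset G (fst q) (snd q). dw G k (insert (w,y) S))"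
proof -
  have "\<not> (\<forall>p\<in>S. Dset G (fst p) (snd p) = {})" using assms by blast
  then have "\<forall>p\<in>S. \<forall>x\<in>Dset G (fst p) (snd p).
        (\<exists>w\<in>Dset G (fst p) (snd p). dw G k (insert (x,w) S))
      \<and> (\<exists>w\<in>Dset G (fst p) (snd p). dw G k (insert (w,x) S))"
    using assms(1) by (simp only: dw.simps(2)[of G k] if_False)
  then show ?thesis using assms(2,3) by blast
qed

lemma dw_SucI:
  assumes "(\<forall>p\<in>S. Dset G (fst p) (snd p) = {}) \<Longrightarrow> piso G S"
    and "\<And>q y. q \<in> S \<Longrightarrow> y \<in> Dset G (fst q) (snd q) \<Longrightarrow>
      (\<exists>w\<in>Dset G (fst q) (snd q). dw G k (insert (y,w) S)) \<and> (\<exists>w\<in>Dset G (fst q) (snd q). dw G k (insert (w,y) S))"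
  shows "dw G (Suc k) S"
proof (cases "\<forall>p\<in>S. Dset G (fst p) (snd p) = {}")
  case True then show ?thesis using assms(1) by simp
next
  case False
  have "\<forall>p\<in>S. \<forall>x\<in>Dset G (fst p) (snd p).
        (\<exists>w\<in>Dset G (fst p) (snd p). dw G k (insert (x,w) S))
      \<and> (\<exists>w\<in>Dset G (fst p) (snd p). dw G k (insert (w,x) S))"
    using assms(2) by blast
  then show ?thesis using False by (simp only: dw.simps(2)[of G k] if_False)
qed

lemma DU_mono: "Q \<subseteq> Q' \<Longrightarrow> DU G Q \<subseteq> DU G Q'"
  unfolding DU_def by blast

lemma DU_mem: "q \<in> Q \<Longrightarrow> y \<in> Dset G (fst q) (snd q) \<Longrightarrow> y \<in> DU G Q"
  unfolding DU_def by blast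

definition Ok :: "graph \<Rightarrow> (nat \<times> nat) set \<Rightarrow> (nat \<times> nat) set \<Rightarrow> bool" where
  "Ok G P Q \<longleftrightarrow> P \<subseteq> Q \<and> (\<forall>p\<in>Q. fst p \<in> verts G \<and> snd p \<in> verts G)
     \<and> (\<forall>p\<in>Q. snd p \<in> snd ` P \<or> snd p \<in> DU G Q) \<and> (\<forall>p\<in>Q. fst p \<in> fst ` P \<or> fst p \<in> DU G Q)"

lemma Ok_move:
  assumes "Ok G P Q" "q \<in> Q" "y \<in> Dset G (fst q) (snd q)" "w \<in> Dset G (fst q) (snd q)"
  shows "Ok G P (insert (y,w) Q)"
proof -
  have sub: "DU G Q \<subseteq> DU G (insert (y,w) Q)" by (rule DU_mono) blast
  have "y \<in> DU G (insert (y,w) Q)" "w \<in> DU G (insert (y,w) Q)"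
    using assms(2-4) by (auto intro: DU_mem)
  moreover have "y \<in> verts G" "w \<in> verts G" using assms(3,4) Dset_verts by blast+
  ultimately show ?thesis using assms(1) sub unfolding Ok_def by auto
qed

lemma first_case:
  assumes "Ok G P Q" "dw G (Suc (k + r)) Q" "x \<in> fst ` Q \<or> x \<in> DU G Q"
  shows "\<exists>Q' x'. Q \<subseteq> Q' \<and> Ok G P Q' \<and> (x,x') \<in> Q' \<and> dw G k Q'"
proof (cases "x \<in> fst ` Q")
  case True
  then obtain x' where "(x,x') \<in> Q" by force
  moreover have "dw G k Q" using dw_le[OF _ assms(2)] by simp
  ultimately show ?thesis using assms(1) by blast
next
  case False
  then have "x \<in> DU G Q" using assms(3) by blast
  then obtain q where q: "q \<in> Q" "x \<in> Dset G (fst q) (snd q)" unfolding DU_def by blast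
  then obtain w where w: "w \<in> Dset G (fst q) (snd q)" "dw G (k + r) (insert (x,w) Q)"
    using dw_SucD[OF assms(2)] by blast
  have "dw G k (insert (x,w) Q)" using dw_le[OF _ w(2)] by simp
  moreover have "Ok G P (insert (x,w) Q)" using Ok_move[OF assms(1) q w(1)] .
  ultimately show ?thesis by blast
qed

lemma dich:
  assumes H: "\<And>Q. Ok G P Q \<Longrightarrow> dw G 1 Q \<Longrightarrow> x \<notin> fst ` Q \<Longrightarrow> x \<notin> DU G Q \<Longrightarrow> piso G (insert (x,c) Q)"
    and Hxc: "Dset G x c = {} \<or> (\<exists>q\<in>P. Dset G (fst q) (snd q) = Dset G x c)"
  shows "Ok G P Q \<Longrightarrow> dw G (k + r + 1) Q \<Longrightarrow>
     (\<exists>Q' x'. Q \<subseteq> Q' \<and> Ok G P Q' \<and> (x,x') \<in> Q' \<and> dw G k Q') \<or> dw G r (insert (x,c) Q)"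
proof (induction r arbitrary: Q)
  case 0
  show ?case
  proof (cases "x \<in> fst ` Q \<or> x \<in> DU G Q")
    case True then show ?thesis using first_case[OF 0(1), of k 0] 0(2) by simp
  next
    case False
    have "dw G 1 Q" by (rule dw_le[OF _ 0(2)]) simp
    then show ?thesis using H[OF 0(1)] False by simp
  qed
next
  case (Suc r)
  show ?case
  proof (cases "x \<in> fst ` Q \<or> x \<in> DU G Q")
    case True then show ?thesis using first_case[OF Suc(2), of k "Suc r"] Suc(3) by simp
  next
    case False
    show ?thesis
    proof (cases "\<exists>Q' x'. Q \<subseteq> Q' \<and> Ok G P Q' \<and> (x,x') \<in> Q' \<and> dw G k Q'")
      case True then show ?thesis by blast
    next
      case NF: False
      have dQ: "dw G (Suc (k + r + 1)) Q" using Suc(3) by simp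
      have d1: "dw G 1 Q" by (rule dw_le[OF _ Suc(3)]) simp
      have PQ: "P \<subseteq> Q" using Suc(2) unfolding Ok_def by blast
      have "dw G (Suc r) (insert (x,c) Q)"
      proof (rule dw_SucI)
        show "piso G (insert (x, c) Q)" if "\<forall>p\<in>insert (x, c) Q. Dset G (fst p) (snd p) = {}"
          using H[OF Suc(2) d1] False by blast
      next
        fix p y assume p: "p \<in> insert (x,c) Q" and y: "y \<in> Dset G (fst p) (snd p)"
        obtain q where q: "q \<in> Q" "Dset G (fst q) (snd q) = Dset G (fst p) (snd p)"
        proof (cases "p = (x,c)")
          case True
          then obtain q where "q \<in> P" "Dset G (fst q) (snd q) = Dset G x c" using Hxc y by auto
          then show ?thesis using that[of q] PQ True by auto
        next
          case False then show ?thesis using that p by auto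
        qed
        have yq: "y \<in> Dset G (fst q) (snd q)" using q y by simp
        have step: "dw G r (insert (x,c) (insert (a,b) Q))"
          if ab: "a \<in> Dset G (fst q) (snd q)" "b \<in> Dset G (fst q) (snd q)" "dw G (k + r + 1) (insert (a,b) Q)" for a b
        proof -
          have ok: "Ok G P (insert (a,b) Q)" using Ok_move[OF Suc(2) q(1) ab(1,2)] .
          from Suc.IH[OF ok ab(3)] show ?thesis
          proof
            assume "\<exists>Q' x'. insert (a,b) Q \<subseteq> Q' \<and> Ok G P Q' \<and> (x,x') \<in> Q' \<and> dw G k Q'"
            then have False using NF by blast
            then show ?thesis ..
          qed
        qed
        obtain w1 where w1: "w1 \<in> Dset G (fst q) (snd q)" "dw G (k + r + 1) (insert (y,w1) Q)"
          using dw_SucD[OF dQ q(1) yq] by blast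
        obtain w2 where w2: "w2 \<in> Dset G (fst q) (snd q)" "dw G (k + r + 1) (insert (w2,y) Q)"
          using dw_SucD[OF dQ q(1) yq] by blast
        have "dw G r (insert (y,w1) (insert (x,c) Q))"
          using step[OF yq w1(1) w1(2)] by (simp add: insert_commute)
        moreover have "dw G r (insert (w2,y) (insert (x,c) Q))"
          using step[OF w2(1) yq w2(2)] by (simp add: insert_commute)
        ultimately show "(\<exists>w\<in>Dset G (fst p) (snd p). dw G r (insert (y,w) (insert (x,c) Q))) \<and>
              (\<exists>w\<in>Dset G (fst p) (snd p). dw G r (insert (w,y) (insert (x,c) Q)))"
          using w1(1) w2(1) q(2) by auto
      qed
      then show ?thesis by blast
    qed
  qed
qed



lemma piso_insertI:
  assumes wf: "wf_graph G" and pQ: "piso G Q"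
    and h: "\<forall>q\<in>Q. (a = fst q \<longleftrightarrow> b = snd q) \<and> (adj G a (fst q) \<longleftrightarrow> adj G b (snd q))"
    and l: "lab G a = lab G b" and aa: "adj G a a \<longleftrightarrow> adj G b b"
  shows "piso G (insert (a,b) Q)"
  unfolding piso_def
proof (intro ballI)
  fix p q assume p: "p \<in> insert (a,b) Q" and q: "q \<in> insert (a,b) Q"
  show "(fst p = fst q \<longleftrightarrow> snd p = snd q) \<and> (adj G (fst p) (fst q) \<longleftrightarrow> adj G (snd p) (snd q)) \<and> lab G (fst p) = lab G (snd p)"
  proof (cases "p = (a,b)")
    case True
    then show ?thesis
    proof (cases "q = (a,b)")
      case True then show ?thesis using `p = (a,b)` l aa by simp
    next
      case False then have "q \<in> Q" using q by simp
      then show ?thesis using h `p = (a,b)` l by auto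
    qed
  next
    case False
    then have pQ': "p \<in> Q" using p by simp
    show ?thesis
    proof (cases "q = (a,b)")
      case True
      have "(a = fst p \<longleftrightarrow> b = snd p) \<and> (adj G a (fst p) \<longleftrightarrow> adj G b (snd p))" using h pQ' by blast
      moreover have "lab G (fst p) = lab G (snd p)" using pQ pQ' unfolding piso_def by blast
      ultimately show ?thesis using True adj_sym[OF wf] by auto
    next
      case False then have "q \<in> Q" using q by simp
      then show ?thesis using pQ pQ' unfolding piso_def by blast
    qed
  qed
qed

definition Inv :: "graph \<Rightarrow> nat \<Rightarrow> nat \<Rightarrow> (nat \<times> nat) set \<Rightarrow> bool" where
  "Inv G u v P \<longleftrightarrow> (u,v) \<in> P \<and> (\<forall>p\<in>P. fst p \<in> verts G \<and> snd p \<in> verts G)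
    \<and> (\<forall>p\<in>P. snd p \<in> DU G P \<or> snd p = v \<or> (snd p, snd p) \<in> P \<or> (snd p = u \<and> (v,u) \<in> P))
    \<and> (\<forall>p\<in>P. fst p \<in> DU G P \<or> fst p = u \<or> (fst p, fst p) \<in> P \<or> (fst p = v \<and> (v,u) \<in> P))"

lemma Inv_Ok: assumes "Inv G u v P" "Ok G P Q" shows "Inv G u v Q"
proof -
  have PQ: "P \<subseteq> Q" using assms(2) unfolding Ok_def by blast
  have D: "DU G P \<subseteq> DU G Q" using DU_mono[OF PQ] .
  show ?thesis unfolding Inv_def
  proof (intro conjI ballI)
    show "(u,v) \<in> Q" using assms PQ unfolding Inv_def by blast
  next
    fix p assume "p \<in> Q" then show "fst p \<in> verts G" using assms(2) unfolding Ok_def by blast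
  next
    fix p assume "p \<in> Q" then show "snd p \<in> verts G" using assms(2) unfolding Ok_def by blast
  next
    fix p assume p: "p \<in> Q"
    then have "snd p \<in> snd ` P \<or> snd p \<in> DU G Q" using assms(2) unfolding Ok_def by blast
    then show "snd p \<in> DU G Q \<or> snd p = v \<or> (snd p, snd p) \<in> Q \<or> (snd p = u \<and> (v,u) \<in> Q)"
    proof
      assume "snd p \<in> snd ` P"
      then obtain p0 where p0: "p0 \<in> P" "snd p0 = snd p" by force
      have "snd p0 \<in> DU G P \<or> snd p0 = v \<or> (snd p0, snd p0) \<in> P \<or> (snd p0 = u \<and> (v,u) \<in> P)"
        using assms(1) p0(1) unfolding Inv_def by blast
      then show ?thesis unfolding p0(2) using PQ D by blast
    qed simp
  next
    fix p assume p: "p \<in> Q"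
    then have "fst p \<in> fst ` P \<or> fst p \<in> DU G Q" using assms(2) unfolding Ok_def by blast
    then show "fst p \<in> DU G Q \<or> fst p = u \<or> (fst p, fst p) \<in> Q \<or> (fst p = v \<and> (v,u) \<in> Q)"
    proof
      assume "fst p \<in> fst ` P"
      then obtain p0 where p0: "p0 \<in> P" "fst p0 = fst p" by force
      have "fst p0 \<in> DU G P \<or> fst p0 = u \<or> (fst p0, fst p0) \<in> P \<or> (fst p0 = v \<and> (v,u) \<in> P)"
        using assms(1) p0(1) unfolding Inv_def by blast
      then show ?thesis unfolding p0(2) using PQ D by blast
    qed simp
  qed
qed

lemma Ok_refl: "Inv G u v P \<Longrightarrow> Ok G P P"
  unfolding Ok_def Inv_def by blast

lemma Inv_insert:
  assumes "Inv G u v P" "a \<in> verts G" "b \<in> verts G"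
    and "b \<in> DU G (insert (a,b) P) \<or> b = v \<or> (b,b) \<in> insert (a,b) P \<or> (b = u \<and> (v,u) \<in> insert (a,b) P)"
    and "a \<in> DU G (insert (a,b) P) \<or> a = u \<or> (a,a) \<in> insert (a,b) P \<or> (a = v \<and> (v,u) \<in> insert (a,b) P)"
  shows "Inv G u v (insert (a,b) P)"
proof -
  have D: "DU G P \<subseteq> DU G (insert (a,b) P)" by (rule DU_mono) blast
  have A: "(u,v) \<in> insert (a,b) P" "\<forall>p\<in>P. fst p \<in> verts G \<and> snd p \<in> verts G"
    "\<forall>p\<in>P. snd p \<in> DU G P \<or> snd p = v \<or> (snd p, snd p) \<in> P \<or> (snd p = u \<and> (v,u) \<in> P)"
    "\<forall>p\<in>P. fst p \<in> DU G P \<or> fst p = u \<or> (fst p, fst p) \<in> P \<or> (fst p = v \<and> (v,u) \<in> P)"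
    using assms(1) unfolding Inv_def by blast+
  show ?thesis unfolding Inv_def
  proof (intro conjI ballI)
    show "(u,v) \<in> insert (a,b) P" using A(1) .
  next
    fix p assume "p \<in> insert (a,b) P" then show "fst p \<in> verts G" using A(2) assms(2) by auto
  next
    fix p assume "p \<in> insert (a,b) P" then show "snd p \<in> verts G" using A(2) assms(3) by auto
  next
    fix p assume p: "p \<in> insert (a,b) P"
    show "snd p \<in> DU G (insert (a,b) P) \<or> snd p = v \<or> (snd p, snd p) \<in> insert (a,b) P \<or> (snd p = u \<and> (v,u) \<in> insert (a,b) P)"
    proof (cases "p = (a,b)")
      case True then show ?thesis using assms(4) by simp
    next
      case False then have "p \<in> P" using p by simp
      then show ?thesis using A(3) D by blast
    qed
  next
    fix p assume p: "p \<in> insert (a,b) P"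
    show "fst p \<in> DU G (insert (a,b) P) \<or> fst p = u \<or> (fst p, fst p) \<in> insert (a,b) P \<or> (fst p = v \<and> (v,u) \<in> insert (a,b) P)"
    proof (cases "p = (a,b)")
      case True then show ?thesis using assms(5) by simp
    next
      case False then have "p \<in> P" using p by simp
      then show ?thesis using A(4) D by blast
    qed
  qed
qed

lemma stepL:
  assumes wf: "wf_graph G" and I: "Inv G u v P" and d: "dw G (2*k+1) P" and xV: "x \<in> verts G"
  shows "\<exists>P' x'. P \<subseteq> P' \<and> Inv G u v P' \<and> dw G k P' \<and> (x,x') \<in> P'"
proof -
  have OkP: "Ok G P P" using Ok_refl[OF I] .
  have uv: "(u,v) \<in> P" using I unfolding Inv_def by blast
  have PV: "\<forall>p\<in>P. fst p \<in> verts G \<and> snd p \<in> verts G" using I unfolding Inv_def by blast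
  have e1: "2*k+1 = Suc (k+k)" "2*k+1 = k+k+1" "2*k+1 = Suc (2*k)" by simp_all
  have dS: "dw G (Suc (k + k)) P" using d unfolding e1(1) .
  show ?thesis
  proof (cases "x \<in> fst ` P \<or> x \<in> DU G P")
    case True
    from first_case[OF OkP dS True] obtain Q' x' where "P \<subseteq> Q'" "Ok G P Q'" "(x,x') \<in> Q'" "dw G k Q'" by blast
    then show ?thesis using Inv_Ok[OF I] by blast
  next
    case False
    then have xA: "x \<notin> fst ` P" and xD: "x \<notin> DU G P" by auto
    have dd: "dw G (k + k + 1) P" using d unfolding e1(2) .
    show ?thesis
    proof (cases "x \<in> snd ` P")
      case False
      have H: "piso G (insert (x,x) Q)" if Q: "Ok G P Q" "dw G 1 Q" "x \<notin> fst ` Q" "x \<notin> DU G Q" for Q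
      proof (rule piso_insertI[OF wf dw_piso[OF Q(2)]])
        show "\<forall>q\<in>Q. (x = fst q \<longleftrightarrow> x = snd q) \<and> (adj G x (fst q) \<longleftrightarrow> adj G x (snd q))"
        proof
          fix q assume q: "q \<in> Q"
          have "x \<noteq> fst q" using Q(3) q by blast
          moreover have "x \<noteq> snd q"
          proof -
            have "snd q \<in> snd ` P \<or> snd q \<in> DU G Q" using Q(1) q unfolding Ok_def by blast
            then show ?thesis using False Q(4) by blast
          qed
          moreover have "x \<notin> Dset G (fst q) (snd q)" using Q(4) q DU_mem by blast
          then have "adj G (fst q) x \<longleftrightarrow> adj G (snd q) x" using Dset_mem[OF wf xV] by blast
          then have "adj G x (fst q) \<longleftrightarrow> adj G x (snd q)" using adj_sym[OF wf] by blast
          ultimately show "(x = fst q \<longleftrightarrow> x = snd q) \<and> (adj G x (fst q) \<longleftrightarrow> adj G x (snd q))" by simp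
        qed
      qed simp_all
      have Hxc: "Dset G x x = {} \<or> (\<exists>q\<in>P. Dset G (fst q) (snd q) = Dset G x x)"
        unfolding Dset_def by simp
      from dich[OF H Hxc OkP dd] show ?thesis
      proof
        assume "\<exists>Q' x'. P \<subseteq> Q' \<and> Ok G P Q' \<and> (x,x') \<in> Q' \<and> dw G k Q'"
        then show ?thesis using Inv_Ok[OF I] by blast
      next
        assume "dw G k (insert (x,x) P)"
        moreover have "Inv G u v (insert (x,x) P)" using Inv_insert[OF I xV xV] by blast
        ultimately show ?thesis by blast
      qed
    next
      case True
      then obtain p where p: "p \<in> P" "snd p = x" by force
      have xv: "x = v"
      proof -
        have "x \<in> DU G P \<or> x = v \<or> (x,x) \<in> P \<or> (x = u \<and> (v,u) \<in> P)" using I p unfolding Inv_def by blast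
        moreover have "x \<noteq> u" using uv xA by (metis fst_conv image_eqI)
        moreover have "(x,x) \<notin> P" using xA by (metis fst_conv image_eqI)
        ultimately show ?thesis using xD by blast
      qed
      have vA: "v \<notin> fst ` P" and vD: "v \<notin> DU G P" using xA xD xv by auto
      have unv: "u \<noteq> v" using uv vA by (metis fst_conv image_eqI)
      have d1P: "dw G (Suc (2*k)) P" using d unfolding e1(3) .
      have uD: "u \<notin> DU G P"
      proof
        assume "u \<in> DU G P"
        then obtain q where "q \<in> P" "u \<in> Dset G (fst q) (snd q)" unfolding DU_def by blast
        then have "v \<in> Dset G (fst q) (snd q)" using mixed1[OF d1P _ uv] by blast
        then show False using vD `q \<in> P` DU_mem by blast
      qed
      have uB: "u \<notin> snd ` P"
      proof
        assume "u \<in> snd ` P"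
        then obtain p where p: "p \<in> P" "snd p = u" by force
        have "snd p \<in> DU G P \<or> snd p = v \<or> (snd p, snd p) \<in> P \<or> (snd p = u \<and> (v,u) \<in> P)" using I p(1) unfolding Inv_def by blast
        then have "u \<in> DU G P \<or> u = v \<or> (u,u) \<in> P \<or> (u = u \<and> (v,u) \<in> P)" unfolding p(2) .
        moreover have "(u,u) \<notin> P"
        proof
          assume "(u,u) \<in> P"
          note hh = bspec[OF bspec[OF dw_piso[OF d, unfolded piso_def] `(u,u) \<in> P`] uv]
          then show False using unv by simp
        qed
        moreover have "(v,u) \<notin> P" using vA by (metis fst_conv image_eqI)
        ultimately show False using uD unv by blast
      qed
      have H: "piso G (insert (v,u) Q)" if Q: "Ok G P Q" "dw G 1 Q" "v \<notin> fst ` Q" "v \<notin> DU G Q" for Q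
      proof -
        have uvQ: "(u,v) \<in> Q" using Q(1) uv unfolding Ok_def by blast
        have d1: "dw G (Suc 0) Q" using Q(2) by (simp only: One_nat_def)
        have pQ: "piso G Q" using dw_piso[OF Q(2)] .
        have uDQ: "u \<notin> DU G Q"
        proof
          assume "u \<in> DU G Q"
          then obtain q where "q \<in> Q" "u \<in> Dset G (fst q) (snd q)" unfolding DU_def by blast
          then have "v \<in> Dset G (fst q) (snd q)" using mixed1[OF d1 _ uvQ] by blast
          then show False using Q(4) `q \<in> Q` DU_mem by blast
        qed
        show ?thesis
        proof (rule piso_insertI[OF wf pQ])
          show "\<forall>q\<in>Q. (v = fst q \<longleftrightarrow> u = snd q) \<and> (adj G v (fst q) \<longleftrightarrow> adj G u (snd q))"
          proof
            fix q assume q: "q \<in> Q"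
            obtain z z' where zz: "q = (z,z')" by force
            have zV: "z \<in> verts G" "z' \<in> verts G" using Q(1) q zz unfolding Ok_def by auto
            have "v \<noteq> z" using Q(3) q zz by (metis fst_conv image_eqI)
            moreover have "u \<noteq> z'"
            proof -
              have "snd q \<in> snd ` P \<or> snd q \<in> DU G Q" using Q(1) q unfolding Ok_def by blast
              then have "z' \<in> snd ` P \<or> z' \<in> DU G Q" using zz by simp
              then show ?thesis using uB uDQ by blast
            qed
            moreover have "adj G u z \<longleftrightarrow> adj G v z'"
              using bspec[OF bspec[OF pQ[unfolded piso_def] uvQ] q] zz by simp
            moreover have "z \<in> Dset G u v \<longleftrightarrow> z' \<in> Dset G u v"
              using mixed1[OF d1 uvQ, of z z'] mixed2[OF d1 uvQ, of z z'] q zz by auto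
            ultimately show "(v = fst q \<longleftrightarrow> u = snd q) \<and> (adj G v (fst q) \<longleftrightarrow> adj G u (snd q))"
              using zz Dset_mem[OF wf zV(1), of u v] Dset_mem[OF wf zV(2), of u v] by auto
          qed
          show "lab G v = lab G u" using bspec[OF bspec[OF pQ[unfolded piso_def] uvQ] uvQ] by simp
          show "adj G v v \<longleftrightarrow> adj G u u" using wf unfolding wf_graph_def by blast
        qed
      qed
      have Hxc: "Dset G v u = {} \<or> (\<exists>q\<in>P. Dset G (fst q) (snd q) = Dset G v u)"
        using uv by (metis Dset_sym fst_conv snd_conv)
      from dich[OF H Hxc OkP dd] show ?thesis
      proof
        assume "\<exists>Q' x'. P \<subseteq> Q' \<and> Ok G P Q' \<and> (v,x') \<in> Q' \<and> dw G k Q'"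
        then show ?thesis using Inv_Ok[OF I] xv by blast
      next
        assume "dw G k (insert (v,u) P)"
        moreover have uV: "u \<in> verts G" and vV: "v \<in> verts G" using bspec[OF PV uv] by simp_all
        then have "Inv G u v (insert (v,u) P)" using Inv_insert[OF I vV uV] by blast
        ultimately show ?thesis using xv by blast
      qed
    qed
  qed
qed



lemma DU_swap: "DU G (prod.swap ` P) = DU G P"
  unfolding DU_def by (auto simp: Dset_sym)

lemma Inv_swap1:
  assumes "Inv G u v P" shows "Inv G v u (prod.swap ` P)"
proof -
  have A: "(u,v) \<in> P" "\<forall>p\<in>P. fst p \<in> verts G \<and> snd p \<in> verts G"
    "\<forall>p\<in>P. snd p \<in> DU G P \<or> snd p = v \<or> (snd p, snd p) \<in> P \<or> (snd p = u \<and> (v,u) \<in> P)"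
    "\<forall>p\<in>P. fst p \<in> DU G P \<or> fst p = u \<or> (fst p, fst p) \<in> P \<or> (fst p = v \<and> (v,u) \<in> P)"
    using assms unfolding Inv_def by blast+
  have m: "(a,b) \<in> prod.swap ` P \<longleftrightarrow> (b,a) \<in> P" for a b by force
  show ?thesis unfolding Inv_def DU_swap
  proof (intro conjI ballI)
    show "(v,u) \<in> prod.swap ` P" using A(1) m by blast
  next
    fix p assume "p \<in> prod.swap ` P" then show "fst p \<in> verts G" using A(2) by auto
  next
    fix p assume "p \<in> prod.swap ` P" then show "snd p \<in> verts G" using A(2) by auto
  next
    fix p assume "p \<in> prod.swap ` P"
    then obtain q where q: "q \<in> P" "p = prod.swap q" by blast
    show "snd p \<in> DU G P \<or> snd p = u \<or> (snd p, snd p) \<in> prod.swap ` P \<or> (snd p = v \<and> (u,v) \<in> prod.swap ` P)"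
      using bspec[OF A(4) q(1)] q(2) m by auto
  next
    fix p assume "p \<in> prod.swap ` P"
    then obtain q where q: "q \<in> P" "p = prod.swap q" by blast
    show "fst p \<in> DU G P \<or> fst p = v \<or> (fst p, fst p) \<in> prod.swap ` P \<or> (fst p = u \<and> (u,v) \<in> prod.swap ` P)"
      using bspec[OF A(3) q(1)] q(2) m by auto
  qed
qed

fun g :: "nat \<Rightarrow> nat" where
  "g 0 = 0"
| "g (Suc n) = 2 * g n + 1"

lemma partial_iso_E: "partial_iso G (map fst E) (map snd E) \<longleftrightarrow> piso G (set E)"
  using partial_iso_piso[of "map fst E" "map snd E" G] by (simp add: zip_map_fst_snd)

lemma ef_main:
  assumes wf: "wf_graph G"
  shows "Inv G u v P \<Longrightarrow> dw G (g n) P \<Longrightarrow> set E \<subseteq> P \<Longrightarrow> ef_win G n (map fst E) (map snd E)"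
proof (induction n arbitrary: E P)
  case 0
  then show ?case using piso_mono[of "set E" P G] by (simp add: partial_iso_E)
next
  case (Suc n)
  have d: "dw G (2 * g n + 1) P" using Suc.prems(2) by simp
  have L: "\<forall>a\<in>verts G. \<exists>b\<in>verts G. ef_win G n (map fst E @ [a]) (map snd E @ [b])"
  proof
    fix a assume a: "a \<in> verts G"
    obtain P' b where P': "P \<subseteq> P'" "Inv G u v P'" "dw G (g n) P'" "(a,b) \<in> P'"
      using stepL[OF wf Suc.prems(1) d a] by blast
    have bV: "b \<in> verts G" using P'(2,4) unfolding Inv_def by force
    have "set (E @ [(a,b)]) \<subseteq> P'" using Suc.prems(3) P'(1,4) by auto
    from Suc.IH[OF P'(2,3) this] have "ef_win G n (map fst E @ [a]) (map snd E @ [b])" by simp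
    then show "\<exists>b\<in>verts G. ef_win G n (map fst E @ [a]) (map snd E @ [b])" using bV by blast
  qed
  have R: "\<forall>b\<in>verts G. \<exists>a\<in>verts G. ef_win G n (map fst E @ [a]) (map snd E @ [b])"
  proof
    fix b assume b: "b \<in> verts G"
    have I': "Inv G v u (prod.swap ` P)" using Inv_swap1[OF Suc.prems(1)] .
    have d': "dw G (2 * g n + 1) (prod.swap ` P)" using d dw_swap by blast
    obtain P'' a where P'': "prod.swap ` P \<subseteq> P''" "Inv G v u P''" "dw G (g n) P''" "(b,a) \<in> P''"
      using stepL[OF wf I' d' b] by blast
    define P' where "P' = prod.swap ` P''"
    have ss: "prod.swap ` prod.swap ` X = X" for X :: "(nat \<times> nat) set" by (simp add: image_image)
    have P': "P \<subseteq> P'" "Inv G u v P'" "dw G (g n) P'" "(a,b) \<in> P'"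
    proof -
      show "P \<subseteq> P'" using image_mono[OF P''(1), of prod.swap] ss unfolding P'_def by simp
      show "Inv G u v P'" using Inv_swap1[OF P''(2)] unfolding P'_def .
      show "dw G (g n) P'" using P''(3) dw_swap unfolding P'_def by blast
      show "(a,b) \<in> P'" using P''(4) unfolding P'_def by force
    qed
    have aV: "a \<in> verts G" using P'(2,4) unfolding Inv_def by force
    have "set (E @ [(a,b)]) \<subseteq> P'" using Suc.prems(3) P'(1,4) by auto
    from Suc.IH[OF P'(2,3) this] have "ef_win G n (map fst E @ [a]) (map snd E @ [b])" by simp
    then show "\<exists>a\<in>verts G. ef_win G n (map fst E @ [a]) (map snd E @ [b])" using aV by blast
  qed
  show ?case using L R by simp
qed

lemma ef_refl: "ef_win G m as as"
  by (induction m arbitrary: as) (auto simp: partial_iso_def)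

lemma partial_iso_trans: "partial_iso G as bs \<Longrightarrow> partial_iso G bs cs \<Longrightarrow> partial_iso G as cs"
  unfolding partial_iso_def by auto

lemma ef_trans: "ef_win G m as bs \<Longrightarrow> ef_win G m bs cs \<Longrightarrow> ef_win G m as cs"
proof (induction m arbitrary: as bs cs)
  case 0 then show ?case using partial_iso_trans by simp
next
  case (Suc m)
  show ?case
  proof (simp only: ef_win.simps, intro conjI ballI)
    fix a assume "a \<in> verts G"
    then obtain b where "b \<in> verts G" "ef_win G m (as @ [a]) (bs @ [b])" using Suc.prems(1) by auto
    then obtain c where "c \<in> verts G" "ef_win G m (bs @ [b]) (cs @ [c])" using Suc.prems(2) by auto
    then show "\<exists>c\<in>verts G. ef_win G m (as @ [a]) (cs @ [c])"
      using Suc.IH `ef_win G m (as @ [a]) (bs @ [b])` by blast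
  next
    fix c assume "c \<in> verts G"
    then obtain b where "b \<in> verts G" "ef_win G m (bs @ [b]) (cs @ [c])" using Suc.prems(2) by auto
    then obtain a where "a \<in> verts G" "ef_win G m (as @ [a]) (bs @ [b])" using Suc.prems(1) by auto
    then show "\<exists>a\<in>verts G. ef_win G m (as @ [a]) (cs @ [c])"
      using Suc.IH `ef_win G m (bs @ [b]) (cs @ [c])` by blast
  qed
qed

lemma edge_ef:
  assumes wf: "wf_graph G" and e: "diff_graph_edge G (g m) y z"
  shows "ef_equiv G m y z"
proof -
  have yz: "y \<in> verts G" "z \<in> verts G" "diff_win G (g m) [y] [z]"
    using e unfolding diff_graph_edge_def diff_equiv_def by auto
  have d: "dw G (g m) {(y,z)}" using yz(3) diff_win_dw[of "[y]" "[z]" G "g m"] by simp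
  have I: "Inv G y z {(y,z)}" unfolding Inv_def using yz(1,2) by auto
  have "ef_win G m (map fst [(y,z)]) (map snd [(y,z)])" using ef_main[OF wf I d, of "[(y,z)]"] by simp
  then show ?thesis unfolding ef_equiv_def by simp
qed

theorem lemma6p1:
  shows "\<exists>l :: nat \<Rightarrow> nat. \<forall>m G. wf_graph G \<longrightarrow>
           (\<forall>u v. same_component G (l m) u v \<longrightarrow> ef_equiv G m u v)"
proof (intro exI allI impI)
  fix m G u v assume wf: "wf_graph G" and sc: "same_component G (g m) u v"
  have "(diff_graph_edge G (g m))\<^sup>*\<^sup>* u v" using sc unfolding same_component_def by blast
  then show "ef_equiv G m u v"
  proof (induction rule: rtranclp_induct)
    case base then show ?case unfolding ef_equiv_def using ef_refl by blast
  next
    case (step y z)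
    then show ?case using edge_ef[OF wf step(2)] ef_trans unfolding ef_equiv_def by blast
  qed
qed


end
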